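(* Let $\alpha<\beta$ be the smallest and the largest real root of $q$. Let $G$ be the subgroup of $\mathbb{R}(C)^*/\mathbb{R}(C)^{*2}$ generated by the square classes $f\,\mathbb{R}(C)^{*2}$ of all psd elements $0\ne f\in\mathbb{R}[C]$ all of whose zeros in $C(\mathbb{C})$ are real. Then $G$ has order four and is generated by the square classes of $x-\alpha$ and $\beta-x$.
   Context: Let $q\in\mathbb{R}[x]$ be a monic polynomial of degree four without multiple roots which is indefinite (takes both positive and negative values on $\mathbb{R}$). Let $C$ be the affine plane curve over $\mathbb{R}$ with equation $y^2+q(x)=0$, with coordinate ring $\mathbb{R}[C]=\mathbb{R}[x,y]/(y^2+q(x))$ and function field $\mathbb{R}(C)$. An element $f\in\mathbb{R}[C]$ is psd if $f(p)\ge0$ for all $p\in C(\mathbb{R})$. *)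

theory Defs
  imports Complex_Main "HOL-Computational_Algebra.Polynomial" "HOL-Computational_Algebra.Fraction_Field"
begin

text \<open>Elements of the coordinate ring R[C] = R[x,y]/(y^2+q) are represented by their
  unique normal form a(x) + b(x) y, i.e. pairs (a,b) of real polynomials.
  Elements of the function field R(C) = R(x)(y) are represented as pairs (a,b) of
  rational functions, standing for a + b y, with y^2 = -q.\<close>

definition to_fract :: "'a::idom \<Rightarrow> 'a fract" where
  "to_fract a = Fract a 1"

type_synonym crel = "real poly \<times> real poly"
type_synonym ffel = "real poly fract \<times> real poly fract"

definition ff_mult :: "real poly \<Rightarrow> ffel \<Rightarrow> ffel \<Rightarrow> ffel" where
  "ff_mult q f g = (case f of (a, b) \<Rightarrow> case g of (c, d) \<Rightarrow>
      (a * c - b * d * to_fract q, a * d + b * c))"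

definition ff_of :: "crel \<Rightarrow> ffel" where
  "ff_of f = (to_fract (fst f), to_fract (snd f))"

definition real_points :: "real poly \<Rightarrow> (real \<times> real) set" where
  "real_points q = {(x, y). y\<^sup>2 + poly q x = 0}"

definition complex_points :: "real poly \<Rightarrow> (complex \<times> complex) set" where
  "complex_points q = {(z, w). w\<^sup>2 + poly (map_poly complex_of_real q) z = 0}"

definition cr_eval :: "crel \<Rightarrow> real \<Rightarrow> real \<Rightarrow> real" where
  "cr_eval f x y = poly (fst f) x + poly (snd f) x * y"

definition cr_ceval :: "crel \<Rightarrow> complex \<Rightarrow> complex \<Rightarrow> complex" where
  "cr_ceval f z w = poly (map_poly complex_of_real (fst f)) z
                    + poly (map_poly complex_of_real (snd f)) z * w"

definition cr_psd :: "real poly \<Rightarrow> crel \<Rightarrow> bool" where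
  "cr_psd q f \<longleftrightarrow> (\<forall>(x, y) \<in> real_points q. cr_eval f x y \<ge> 0)"

definition cr_zeros_real :: "real poly \<Rightarrow> crel \<Rightarrow> bool" where
  "cr_zeros_real q f \<longleftrightarrow>
     (\<forall>(z, w) \<in> complex_points q. cr_ceval f z w = 0 \<longrightarrow> Im z = 0 \<and> Im w = 0)"

inductive_set ff_gen :: "real poly \<Rightarrow> ffel set \<Rightarrow> ffel set" for q S where
  one: "(1, 0) \<in> ff_gen q S"
| base: "f \<in> S \<Longrightarrow> f \<in> ff_gen q S"
| mult: "f \<in> ff_gen q S \<Longrightarrow> g \<in> ff_gen q S \<Longrightarrow> ff_mult q f g \<in> ff_gen q S"
| inv: "f \<in> ff_gen q S \<Longrightarrow> ff_mult q f g = (1, 0) \<Longrightarrow> g \<in> ff_gen q S"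

definition sq_class :: "real poly \<Rightarrow> ffel \<Rightarrow> ffel set" where
  "sq_class q f = {g. \<exists>h. h \<noteq> (0, 0) \<and> g = ff_mult q f (ff_mult q h h)}"

definition psd_realzero_elems :: "real poly \<Rightarrow> ffel set" where
  "psd_realzero_elems q = {ff_of f | f. f \<noteq> (0, 0) \<and> cr_psd q f \<and> cr_zeros_real q f}"

end

theory Submission
  imports Defs "HOL-Computational_Algebra.Fundamental_Theorem_Algebra"
begin

abbreviation cpoly :: "real poly \<Rightarrow> complex poly" where "cpoly p \<equiv> map_poly complex_of_real p"

lemma cpoly_mult: "cpoly (p*q) = cpoly p * cpoly q"
  by (rule poly_eqI) (simp add: coeff_map_poly coeff_mult)
lemma cpoly_add: "cpoly (p+q) = cpoly p + cpoly q"
  by (rule poly_eqI) (simp add: coeff_map_poly)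
lemma cpoly_diff: "cpoly (p-q) = cpoly p - cpoly q"
  by (rule poly_eqI) (simp add: coeff_map_poly)
lemma cpoly_uminus: "cpoly (-p) = - cpoly p"
  by (rule poly_eqI) (simp add: coeff_map_poly)
lemma cpoly_pCons: "cpoly (pCons a p) = pCons (of_real a) (cpoly p)"
  by (simp add: map_poly_pCons)
lemma cpoly_power: "cpoly (p^n) = cpoly p ^ n"
  by (induct n) (simp_all add: cpoly_mult)
lemma cpoly_eq_0: "cpoly p = 0 \<longleftrightarrow> p = 0"
  by (simp add: map_poly_eq_0_iff)
lemma degree_cpoly: "degree (cpoly p) = degree p"
  by (simp add: degree_map_poly)
lemma poly_cpoly: "poly (cpoly p) (of_real x) = of_real (poly p x)"
  by (induct p) (simp_all add: cpoly_pCons)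
lemma cpoly_1: "cpoly 1 = 1" by simp

lemma cpoly_dvd: "cpoly A dvd cpoly B \<Longrightarrow> A dvd B"
proof -
  assume d: "cpoly A dvd cpoly B"
  show "A dvd B"
  proof (cases "A = 0")
    case True then show ?thesis using d by (simp add: cpoly_eq_0)
  next
    case False
    have e: "B = A * (B div A) + B mod A" by simp
    then have "cpoly B = cpoly A * cpoly (B div A) + cpoly (B mod A)"
      by (metis cpoly_add cpoly_mult)
    then have "cpoly A dvd cpoly (B mod A)" using d
      by (metis dvd_add_right_iff dvd_triv_left)
    moreover have "B mod A = 0 \<or> degree (B mod A) < degree A" using degree_mod_less[OF False] by blast
    ultimately have "B mod A = 0"
      by (metis cpoly_eq_0 degree_cpoly dvd_imp_degree_le leD)
    then show ?thesis by (simp add: mod_eq_0_iff_dvd)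
  qed
qed

lemma cpoly_linear: "cpoly [:-r,1:] = [:- of_real r, 1:]"
  by (simp add: cpoly_pCons)

lemma order_cpoly: assumes False: "p \<noteq> 0" shows "order (of_real r) (cpoly p) = order r p"
proof -
  have "[:-r,1:]^n dvd p \<longleftrightarrow> [:- of_real r,1:]^n dvd cpoly p" for n
    apply (rule iffI)
     apply (metis cpoly_linear cpoly_mult cpoly_power dvd_def)
    by (metis cpoly_dvd cpoly_linear cpoly_power)
  then show ?thesis using False
    by (metis cpoly_eq_0 order_divides le_antisym order_1 order_2 Suc_n_not_le_n )
qed



lemma to_fract_mult: "to_fract (a*b) = to_fract a * to_fract b" by (simp add: to_fract_def)
lemma to_fract_add: "to_fract (a+b) = to_fract a + to_fract b" by (simp add: to_fract_def)
lemma to_fract_diff: "to_fract (a-b) = to_fract a - to_fract b" by (simp add: to_fract_def)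
lemma to_fract_uminus: "to_fract (-a) = - to_fract a" by (simp add: to_fract_def)
lemma to_fract_0: "to_fract 0 = 0" by (simp add: to_fract_def Zero_fract_def)
lemma to_fract_1: "to_fract 1 = 1" by (simp add: to_fract_def One_fract_def)
lemma to_fract_eq: "to_fract a = to_fract b \<longleftrightarrow> a = b" by (simp add: to_fract_def eq_fract)
lemma to_fract_eq_0: "to_fract a = 0 \<longleftrightarrow> a = 0" by (simp add: to_fract_def eq_fract Zero_fract_def)

lemma fm_comm: "ff_mult q f g = ff_mult q g f"
  by (auto simp: ff_mult_def algebra_simps split: prod.splits)
lemma fm_assoc: "ff_mult q (ff_mult q f g) h = ff_mult q f (ff_mult q g h)"
  by (auto simp: ff_mult_def algebra_simps split: prod.splits)
lemma fm_one: "ff_mult q (1,0) f = f"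
  by (auto simp: ff_mult_def split: prod.splits)

interpretation K: comm_monoid "ff_mult q" "(1,0)" for q
  apply unfold_locales
    apply (rule fm_assoc)
   apply (rule fm_comm)
  apply (metis fm_comm fm_one)
  done

lemmas fm_ac = K.assoc K.commute K.left_commute

definition nrm :: "real poly \<Rightarrow> ffel \<Rightarrow> real poly fract" where
  "nrm q z = fst z * fst z + to_fract q * snd z * snd z"

lemma nrm_mult: "nrm q (ff_mult q f g) = nrm q f * nrm q g"
  by (auto simp: ff_mult_def nrm_def algebra_simps split: prod.splits)

definition ffinv :: "real poly \<Rightarrow> ffel \<Rightarrow> ffel" where
  "ffinv q z = (fst z / nrm q z, - snd z / nrm q z)"

locale KF =
  fixes q :: "real poly"
  assumes nsq: "\<And>c. c * c \<noteq> - to_fract q"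
begin

lemma nrm_0: "nrm q z = 0 \<longleftrightarrow> z = (0,0)"
proof
  assume n: "nrm q z = 0"
  obtain a b where z: "z = (a,b)" by (cases z)
  show "z = (0,0)"
  proof (cases "b = 0")
    case True then show ?thesis using n z by (simp add: nrm_def)
  next
    case False
    have n2: "a*a + to_fract q * b * b = 0" using n z by (simp add: nrm_def)
    have "(a/b) * (a/b) = - to_fract q" using n2 False
      by (simp add: field_simps)
    then show ?thesis using nsq by blast
  qed
qed (simp add: nrm_def)

lemma fm_inv: assumes "z \<noteq> (0,0)" shows "ff_mult q z (ffinv q z) = (1,0)"
proof -
  obtain a b where z: "z = (a,b)" by (cases z)
  have n: "a*a + to_fract q * b * b \<noteq> 0" using nrm_0[of z] assms z by (simp add: nrm_def)
  show ?thesis using n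
    apply (simp add: z ff_mult_def ffinv_def nrm_def add_divide_distrib diff_divide_distrib algebra_simps)
    by (simp add: add_divide_distrib[symmetric])
qed

lemma fm_nz: "f \<noteq> (0,0) \<Longrightarrow> g \<noteq> (0,0) \<Longrightarrow> ff_mult q f g \<noteq> (0,0)"
  using nrm_0 nrm_mult by (metis mult_eq_0_iff)

lemma ffinv_nz: "z \<noteq> (0,0) \<Longrightarrow> ffinv q z \<noteq> (0,0)"
  using fm_inv[of z] by (auto simp: ff_mult_def)

definition R :: "ffel \<Rightarrow> ffel \<Rightarrow> bool" where
  "R a b \<longleftrightarrow> b \<in> sq_class q a"

lemma R_def2: "R a b \<longleftrightarrow> (\<exists>h. h \<noteq> (0,0) \<and> b = ff_mult q a (ff_mult q h h))"
  by (simp add: R_def sq_class_def)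

lemma R_refl: "R a a"
  unfolding R_def2 by (rule exI[of _ "(1,0)"]) (simp add: fm_one K.commute[of q a])

lemma R_trans: "R a b \<Longrightarrow> R b c \<Longrightarrow> R a c"
  unfolding R_def2
  apply (elim exE conjE)
  subgoal for h k
    by (rule exI[of _ "ff_mult q h k"]) (simp add: fm_nz fm_ac)
  done

lemma R_sym: "R a b \<Longrightarrow> R b a"
  unfolding R_def2
  apply (elim exE conjE)
  subgoal for h
    apply (rule exI[of _ "ffinv q h"])
    using fm_inv[of h] ffinv_nz[of h]
    by (simp add: fm_ac)
  done

lemma R_mult: "R a b \<Longrightarrow> R c d \<Longrightarrow> R (ff_mult q a c) (ff_mult q b d)"
  unfolding R_def2
  apply (elim exE conjE)
  subgoal for h k
    by (rule exI[of _ "ff_mult q h k"]) (simp add: fm_nz fm_ac)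
  done

lemma R_sq: "h \<noteq> (0,0) \<Longrightarrow> R a (ff_mult q a (ff_mult q h h))"
  unfolding R_def2 by blast

lemma R_from: assumes "ff_mult q a b = ff_mult q h h" "a \<noteq> (0,0)" "h \<noteq> (0,0)" shows "R a b"
  unfolding R_def2
proof (rule exI[of _ "ff_mult q h (ffinv q a)"], intro conjI)
  show "ff_mult q h (ffinv q a) \<noteq> (0,0)" using assms by (simp add: fm_nz ffinv_nz)
  have i: "ff_mult q a (ffinv q a) = (1,0)" using fm_inv assms by simp
  have "ff_mult q a (ff_mult q (ff_mult q h (ffinv q a)) (ff_mult q h (ffinv q a)))
     = ff_mult q (ff_mult q h h) (ff_mult q a (ff_mult q (ffinv q a) (ffinv q a)))"
    by (simp add: fm_ac)
  also have "\<dots> = ff_mult q (ff_mult q a b) (ff_mult q a (ff_mult q (ffinv q a) (ffinv q a)))"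
    using assms(1) by simp
  also have "\<dots> = ff_mult q b (ff_mult q (ff_mult q a (ffinv q a)) (ff_mult q a (ffinv q a)))"
    by (simp add: fm_ac)
  also have "\<dots> = b" using i by simp
  finally show "b = ff_mult q a (ff_mult q (ff_mult q h (ffinv q a)) (ff_mult q h (ffinv q a)))" by simp
qed

lemma R_sq_class: "R a b \<Longrightarrow> sq_class q a = sq_class q b"
  using R_trans R_sym unfolding R_def by blast

end


lemma root_exists: "degree (p::complex poly) > 0 \<Longrightarrow> \<exists>z. poly p z = 0"
  by (rule fundamental_theorem_of_algebra_alt) auto

lemma nat_par: "(a::nat) + 2*x = b + 2*y \<Longrightarrow> even (a+b)" by presburger

lemma parity_lemma:
  assumes "A * (X * X) = B * (Y * Y)" "A \<noteq> 0" "B \<noteq> 0" "X \<noteq> 0" "Y \<noteq> 0"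
  shows "even (order z (cpoly A) + order z (cpoly B))"
proof -
  have "cpoly A * (cpoly X * cpoly X) = cpoly B * (cpoly Y * cpoly Y)"
    using assms(1) by (metis cpoly_mult)
  then have "order z (cpoly A * (cpoly X * cpoly X)) = order z (cpoly B * (cpoly Y * cpoly Y))" by simp
  then have "order z (cpoly A) + 2 * order z (cpoly X) = order z (cpoly B) + 2 * order z (cpoly Y)"
    using assms by (simp add: order_mult cpoly_eq_0)
  then show ?thesis using nat_par by blast
qed

lemma nosq:
  assumes "A \<noteq> 0" "B \<noteq> 0" "odd (order z (cpoly A) + order z (cpoly B))"
  shows "to_fract A \<noteq> c * c * to_fract B"
proof
  assume e: "to_fract A = c * c * to_fract B"
  obtain n d where c: "c = Fract n d" and d: "d \<noteq> 0" by (cases c) auto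
  have "Fract A 1 = Fract (n*n*B) (d*d)" using e c d by (simp add: to_fract_def)
  then have e2: "A * (d * d) = B * (n * n)" using d by (simp add: eq_fract algebra_simps)
  have "n \<noteq> 0" using e2 assms d by auto
  then show False using parity_lemma[OF e2] assms d by auto
qed

abbreviation cjp :: "complex poly \<Rightarrow> complex poly" where "cjp p \<equiv> map_poly cnj p"

lemma cjp_mult: "cjp (p*q) = cjp p * cjp q"
  by (rule poly_eqI) (simp add: coeff_map_poly coeff_mult)
lemma cjp_power: "cjp (p^n) = cjp p ^ n"
  by (induct n) (simp_all add: cjp_mult)
lemma cjp_cpoly: "cjp (cpoly p) = cpoly p"
  by (rule poly_eqI) (simp add: coeff_map_poly)
lemma cjp_lin: "cjp [:-z,1:] = [:- cnj z, 1:]"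
  by (simp add: map_poly_pCons)

lemma order_cnj_le: assumes "p \<noteq> 0" shows "order z (cpoly p) \<le> order (cnj z) (cpoly p)"
proof -
  have "[:-z,1:]^(order z (cpoly p)) dvd cpoly p" by (rule order_1)
  then obtain r where "cpoly p = [:-z,1:]^(order z (cpoly p)) * r" by (auto simp: dvd_def)
  then have "cjp (cpoly p) = cjp ([:-z,1:]^(order z (cpoly p)) * r)" by simp
  also have "\<dots> = [:-cnj z,1:]^(order z (cpoly p)) * cjp r"
    by (simp only: cjp_mult cjp_power cjp_lin)
  finally have "cjp (cpoly p) = [:-cnj z,1:]^(order z (cpoly p)) * cjp r" .
  then have "[:-cnj z,1:]^(order z (cpoly p)) dvd cpoly p" unfolding cjp_cpoly by (metis dvd_triv_left)
  then show ?thesis using assms by (simp add: order_divides cpoly_eq_0)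
qed

lemma order_cnj: assumes "p \<noteq> 0" shows "order (cnj z) (cpoly p) = order z (cpoly p)"
  using order_cnj_le[OF assms, of z] order_cnj_le[OF assms, of "cnj z"] by simp

lemma pos_nbhd:
  fixes R :: "real poly"
  assumes "poly R r > 0" shows "\<exists>d>0. \<forall>x. \<bar>x - r\<bar> < d \<longrightarrow> poly R x > 0"
proof -
  have "(\<lambda>x. poly R x) \<midarrow>r\<rightarrow> poly R r" using poly_isCont[where p=R and x=r] by (simp add: isCont_def)
  from LIM_D[OF this assms] obtain s where s: "s > 0"
    "\<forall>x. x \<noteq> r \<and> norm (x - r) < s \<longrightarrow> norm (poly R x - poly R r) < poly R r" by blast
  show ?thesis
  proof (intro exI[of _ s] conjI allI impI)
    fix x assume "\<bar>x - r\<bar> < s"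
    then show "poly R x > 0" using s assms by (cases "x = r") auto
  qed (use s in auto)
qed

lemma neg_nbhd:
  fixes R :: "real poly"
  assumes "poly R r < 0" shows "\<exists>d>0. \<forall>x. \<bar>x - r\<bar> < d \<longrightarrow> poly R x < 0"
  using pos_nbhd[of "-R" r] assms by auto

lemma odd_sign:
  fixes T :: "real poly"
  assumes T: "T \<noteq> 0" and d: "d > 0" and nn: "\<forall>x. \<bar>x - r\<bar> < d \<longrightarrow> poly T x \<ge> 0"
  shows "even (order r T)"
proof (rule ccontr)
  assume odd: "odd (order r T)"
  obtain R where R: "T = [:-r,1:]^(order r T) * R" "\<not> [:-r,1:] dvd R"
    using order_decomp[OF T] by blast
  have Rr: "poly R r \<noteq> 0" using R(2) by (simp add: poly_eq_0_iff_dvd)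
  have pT: "poly T x = (x - r)^(order r T) * poly R x" for x
    by (subst R(1)) (simp add: poly_power)
  show False
  proof (cases "poly R r > 0")
    case True
    then obtain e where e: "e > 0" "\<forall>x. \<bar>x - r\<bar> < e \<longrightarrow> poly R x > 0" using pos_nbhd by blast
    define x where "x = r - min d e / 2"
    have "\<bar>x - r\<bar> < e" "\<bar>x - r\<bar> < d" "x - r < 0" using d e by (auto simp: x_def)
    then have "poly R x > 0" "(x - r)^(order r T) < 0" using e odd
      by (auto simp: power_less_zero_eq)
    then have "poly T x < 0" by (simp add: pT mult_neg_pos)
    then show False using nn \<open>\<bar>x - r\<bar> < d\<close> by force
  next
    case False
    then have "poly R r < 0" using Rr by simp
    then obtain e where e: "e > 0" "\<forall>x. \<bar>x - r\<bar> < e \<longrightarrow> poly R x < 0" using neg_nbhd by blast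
    define x where "x = r + min d e / 2"
    have "\<bar>x - r\<bar> < e" "\<bar>x - r\<bar> < d" "x - r > 0" using d e by (auto simp: x_def)
    then have "poly R x < 0" "(x - r)^(order r T) > 0" using e by auto
    then have "poly T x < 0" by (simp add: pT mult_pos_neg)
    then show False using nn \<open>\<bar>x - r\<bar> < d\<close> by force
  qed
qed



lemma order_lin_power_even: "even (order w ([:-z,1:]^2 :: complex poly))"
proof -
  have "order w ([:-z,1:]*[:-z,1:]) = order w [:-z,1:] + order w [:-z,1:]"
    by (rule order_mult) simp
  then show ?thesis by (simp add: power2_eq_square)
qed

lemma two_le: "(n::nat) \<noteq> 0 \<Longrightarrow> even n \<Longrightarrow> 2 \<le> n" by presburger

lemma even_sq:
  fixes T :: "real poly"
  assumes "T \<noteq> 0" "\<forall>z. even (order z (cpoly T))" "poly T x0 > 0"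
  shows "\<exists>g. T = g * g"
  using assms
proof (induct "degree T" arbitrary: T rule: less_induct)
  case less
  show ?case
  proof (cases "degree T = 0")
    case True
    then obtain c where c: "T = [:c:]" by (metis degree_eq_zeroE)
    then have "c > 0" using less.prems by simp
    then show ?thesis using c by (intro exI[of _ "[:sqrt c:]"]) simp
  next
    case False
    then obtain z where z: "poly (cpoly T) z = 0" using root_exists[of "cpoly T"] by (auto simp: degree_cpoly)
    have cT: "cpoly T \<noteq> 0" using less.prems by (simp add: cpoly_eq_0)
    have oz: "order z (cpoly T) \<ge> 2"
    proof -
      have "order z (cpoly T) \<noteq> 0" using z cT order_root by blast
      moreover have "even (order z (cpoly T))" using less.prems by blast
      ultimately show ?thesis using two_le by blast
    qed
    obtain D :: "real poly" where D: "D * D dvd T" "degree D > 0" "poly D x0 \<noteq> 0"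
      "\<And>w. even (order w (cpoly (D * D)))"
    proof (cases "Im z = 0")
      case True
      define r where "r = Re z"
      have zr: "z = of_real r" using True by (simp add: r_def complex_eq_iff)
      have "[:-z,1:]^2 dvd cpoly T" using oz by (simp add: order_divides)
      then have "cpoly ([:-r,1:] * [:-r,1:]) dvd cpoly T"
        by (simp only: zr cpoly_mult cpoly_linear power2_eq_square)
      then have dv: "[:-r,1:] * [:-r,1:] dvd T" by (rule cpoly_dvd)
      have "poly T x0 \<noteq> 0" using less.prems by simp
      then have "poly [:-r,1:] x0 \<noteq> 0" using dv by (metis dvd_def mult_eq_0_iff poly_mult)
      moreover have "even (order w (cpoly ([:-r,1:] * [:-r,1:])))" for w
        using order_lin_power_even[of w "of_real r"] by (simp only: cpoly_mult cpoly_linear power2_eq_square)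
      ultimately show ?thesis using that[OF dv] by simp
    next
      case False
      define Q :: "real poly" where "Q = [:(Re z)^2 + (Im z)^2, -2 * Re z, 1:]"
      have cQ: "cpoly Q = [:-z,1:] * [:-cnj z,1:]"
        by (simp add: Q_def cpoly_pCons complex_eq_iff power2_eq_square algebra_simps)
      have ocz: "order (cnj z) (cpoly T) \<ge> 2" using oz order_cnj[of T z] less.prems by simp
      have "[:-z,1:]^2 dvd cpoly T" using oz by (simp add: order_divides)
      then obtain U where U: "cpoly T = [:-z,1:]^2 * U" by (auto simp: dvd_def)
      have Unz: "U \<noteq> 0" using U cT by auto
      have "order (cnj z) [:-z,1:] = 0"
        using False by (intro order_0I) (simp add: complex_eq_iff)
      moreover have "order (cnj z) ([:-z,1:]*[:-z,1:]) = order (cnj z) [:-z,1:] + order (cnj z) [:-z,1:]"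
        by (rule order_mult) simp
      ultimately have "order (cnj z) ([:-z,1:]^2) = 0" by (simp only: power2_eq_square)
      then have "order (cnj z) U \<ge> 2" using ocz U Unz by (simp add: order_mult)
      then have "[:-cnj z,1:]^2 dvd U" by (simp add: order_divides)
      then have "[:-z,1:]^2 * [:-cnj z,1:]^2 dvd cpoly T" using U by simp
      then have "cpoly (Q * Q) dvd cpoly T" by (simp add: cpoly_mult cQ power2_eq_square algebra_simps)
      then have dv: "Q * Q dvd T" by (rule cpoly_dvd)
      have "poly Q x0 = (x0 - Re z)^2 + (Im z)^2" by (simp add: Q_def power2_eq_square algebra_simps)
      then have "poly Q x0 > 0" using False by (simp add: add_nonneg_pos)
      moreover have "even (order w (cpoly (Q * Q)))" for w
      proof -
        have "cpoly (Q*Q) \<noteq> 0" using cQ by (auto simp: cpoly_mult)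
        then show ?thesis by (simp add: cpoly_mult order_mult)
      qed
      moreover have "degree Q > 0" by (simp add: Q_def)
      ultimately show ?thesis using that[OF dv] by simp
    qed
    then obtain T1 where T1: "T = D * D * T1" by (auto simp: dvd_def)
    have T1nz: "T1 \<noteq> 0" using T1 less.prems by auto
    have Dnz: "D \<noteq> 0" using D by auto
    have deg: "degree T1 < degree T" using T1 T1nz Dnz D(2) by (simp add: degree_mult_eq)
    have ev: "\<forall>w. even (order w (cpoly T1))"
    proof
      fix w
      have "order w (cpoly T) = order w (cpoly (D*D)) + order w (cpoly T1)"
        unfolding T1 cpoly_mult using T1 less.prems by (intro order_mult) (simp add: cpoly_eq_0 flip: cpoly_mult)
      then show "even (order w (cpoly T1))" using D(4)[of w] less.prems by (metis even_add)
    qed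
    have "poly T x0 = (poly D x0)^2 * poly T1 x0" using T1 by (simp add: power2_eq_square)
    then have "poly T1 x0 > 0" using less.prems D(3) by (metis zero_less_mult_iff zero_less_power2 not_less_iff_gr_or_eq)
    then obtain g1 where "T1 = g1 * g1" using less.hyps[OF deg T1nz ev] by blast
    then show ?thesis using T1 by (intro exI[of _ "D * g1"]) (simp add: algebra_simps)
  qed
qed



lemma order_lin: "order z [:-a,1:] = (if z = a then 1 else (0::nat))"
  using order_power_n_n[of a 1] by (auto intro!: order_0I)

lemma nonroot_in: "p \<noteq> 0 \<Longrightarrow> (a::real) < b \<Longrightarrow> \<exists>x. a < x \<and> x < b \<and> poly p x \<noteq> 0"
proof -
  assume p: "p \<noteq> 0" and ab: "a < b"
  have "infinite {a<..<b}" using ab by simp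
  moreover have "finite {x. poly p x = 0}" using poly_roots_finite[OF p] .
  ultimately have "\<not> {a<..<b} \<subseteq> {x. poly p x = 0}" using finite_subset by blast
  then show ?thesis by auto
qed

lemma pos_right:
  fixes p :: "real poly"
  assumes lc: "lead_coeff p > 0" and nr: "\<forall>y>x. poly p y \<noteq> 0" and that: "y > x"
  shows "poly p y > 0"
proof (rule ccontr)
  assume "\<not> poly p y > 0"
  then have py: "poly p y < 0" using nr that by force
  obtain n where n: "\<forall>t\<ge>n. poly p t \<ge> lead_coeff p" using poly_pinfty_gt_lc[OF lc] by blast
  define t where "t = max n (y+1)"
  have "poly p t \<ge> lead_coeff p" using n by (simp add: t_def)
  then have "poly p t > 0" using lc by simp
  moreover have "y < t" by (simp add: t_def)
  ultimately obtain r where "y < r" "poly p r = 0" using poly_IVT_pos[of y t p] py by blast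
  then show False using nr that by auto
qed

locale QS =
  fixes q :: "real poly" and \<alpha> \<beta> :: real
  assumes monic: "lead_coeff q = 1"
    and deg: "degree q = 4"
    and sqfree: "rsquarefree (map_poly complex_of_real q)"
    and indef: "(\<exists>x. poly q x > 0) \<and> (\<exists>x. poly q x < 0)"
    and alpha: "poly q \<alpha> = 0" and beta: "poly q \<beta> = 0"
    and extreme: "\<forall>x. poly q x = 0 \<longrightarrow> \<alpha> \<le> x \<and> x \<le> \<beta>"
begin

lemma qnz: "q \<noteq> 0" using deg by auto

lemma ordq_le: "order z (cpoly q) \<le> 1"
  using sqfree unfolding rsquarefree_def by (metis le_refl zero_le_one)

lemma q_pos_right: "x > \<beta> \<Longrightarrow> poly q x > 0"
  using pos_right[of q \<beta>] monic extreme by force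

lemma q_pos_left: "x < \<alpha> \<Longrightarrow> poly q x > 0"
proof -
  assume x: "x < \<alpha>"
  define r where "r = pcompose q [:0,-1:]"
  have pr: "poly r y = poly q (-y)" for y by (simp add: r_def poly_pcompose)
  have "lead_coeff r = 1" unfolding r_def using monic deg by (subst lead_coeff_comp) auto
  moreover have "\<forall>y>-\<alpha>. poly r y \<noteq> 0" using extreme by (auto simp: pr)
  ultimately have "poly r (-x) > 0" using pos_right[of r "-\<alpha>"] x by simp
  then show ?thesis by (simp add: pr)
qed

lemma q_nonpos: assumes "poly q x \<le> 0" shows "\<alpha> \<le> x \<and> x \<le> \<beta>"
proof -
  have "\<not> x < \<alpha>" "\<not> x > \<beta>" using q_pos_left[of x] q_pos_right[of x] assms by auto
  then show ?thesis by simp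
qed

lemma ab: "\<alpha> < \<beta>"
proof -
  obtain x where "poly q x < 0" using indef by blast
  then have "\<alpha> \<le> x" "x \<le> \<beta>" "x \<noteq> \<alpha>" "x \<noteq> \<beta>" using q_nonpos alpha beta by force+
  then show ?thesis by simp
qed

definition m :: "real poly" where "m = q div ([:-\<alpha>,1:] * [:-\<beta>,1:])"

lemma q_split: "q = [:-\<alpha>,1:] * [:-\<beta>,1:] * m"
proof -
  obtain q1 where q1: "q = [:-\<alpha>,1:] * q1" using alpha by (metis poly_eq_0_iff_dvd dvdE)
  have "poly q1 \<beta> = 0" using beta ab by (simp add: q1)
  then obtain q2 where q2: "q1 = [:-\<beta>,1:] * q2" by (metis poly_eq_0_iff_dvd dvdE)
  have qq: "q = ([:-\<alpha>,1:] * [:-\<beta>,1:]) * q2" using q1 q2 by (metis mult.assoc)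
  have nz: "[:-\<alpha>,1:] * [:-\<beta>,1:] \<noteq> 0" by (simp del: mult_pCons_left mult_pCons_right)
  have "q div ([:-\<alpha>,1:] * [:-\<beta>,1:]) = q2"
    using nonzero_mult_div_cancel_left[OF nz, of q2] by (simp only: qq)
  then have "m = q2" by (simp only: m_def)
  with qq show ?thesis by simp
qed

lemma m_deg: "degree m = 2" and m_lc: "lead_coeff m = 1"
proof -
  have mnz: "m \<noteq> 0" using q_split qnz by auto
  have d2: "degree ([:-\<alpha>,1:] * [:-\<beta>,1:]) = 2" by (subst degree_mult_eq) auto
  have "degree q = degree ([:-\<alpha>,1:] * [:-\<beta>,1:]) + degree m" using mnz
    by (subst q_split) (rule degree_mult_eq, auto)
  then show "degree m = 2" using deg d2 by simp
  have "lead_coeff q = lead_coeff ([:-\<alpha>,1:] * [:-\<beta>,1:] * m)" using q_split by metis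
  also have "\<dots> = lead_coeff m" by (simp only: lead_coeff_mult) simp
  finally have "lead_coeff q = lead_coeff m" .
  then show "lead_coeff m = 1" using monic by simp
qed

lemma m_form: "m = [:coeff m 0, coeff m 1, 1:]"
proof (rule poly_eqI)
  fix n show "coeff m n = coeff [:coeff m 0, coeff m 1, 1:] n"
  proof -
    consider "n = 0" | "n = 1" | "n = 2" | "n > 2" by linarith
    then show ?thesis
    proof cases
      case 3 then show ?thesis using m_deg m_lc by (simp add: numeral_2_eq_2)
    next
      case 4
      have "coeff [:coeff m 0, coeff m 1, 1:] n = 0" using 4 by (intro coeff_eq_0) simp
      then show ?thesis using coeff_eq_0[of m n] m_deg 4 by simp
    qed simp_all
  qed
qed

lemma m_roots: "\<exists>z0 z1. cpoly m = [:-z0,1:] * [:-z1,1:]"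
proof -
  define b c where "b = coeff m 1" and "c = coeff m 0"
  define s where "s = csqrt (of_real (b^2 - 4*c))"
  define z0 where "z0 = (- of_real b + s)/2"
  define z1 where "z1 = (- of_real b - s)/2"
  have s2: "s * s = of_real (b^2 - 4*c)" using power2_csqrt by (simp add: s_def power2_eq_square)
  have "cpoly m = [:of_real c, of_real b, 1:]" by (subst m_form) (simp add: b_def c_def cpoly_pCons)
  also have "\<dots> = [:-z0,1:] * [:-z1,1:]"
  proof -
    have "z0 * z1 = of_real c"
      unfolding z0_def z1_def using s2 by (simp add: algebra_simps power2_eq_square)
    moreover have "z0 + z1 = - of_real b" unfolding z0_def z1_def by (simp add: field_simps)
    moreover have "[:-z0,1:] * [:-z1,1:] = [:z0*z1, -(z0+z1), 1:]" by (simp add: algebra_simps)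
    ultimately show ?thesis by simp
  qed
  finally show ?thesis by blast
qed

end


lemma cpoly_inj: "cpoly a = cpoly b \<Longrightarrow> a = b"
  by (metis cpoly_diff cpoly_eq_0 eq_iff_diff_eq_0)

lemma poly_cpoly_cnj: "poly (cpoly p) (cnj z) = cnj (poly (cpoly p) z)"
  by (induct p) (simp_all add: cpoly_pCons)

lemma ord_T:
  fixes p G :: "real poly"
  assumes p: "p \<noteq> 0" and G: "cpoly G = (if k0 then [:-w0,1:] else 1) * (if k1 then [:-w1,1:] else 1)"
  shows "order z (cpoly (p * (if i then [:-a,1:] else 1) * (if j then [:b,-1:] else 1) * G))
    = order z (cpoly p) + (if i \<and> z = of_real a then 1 else 0) + (if j \<and> z = of_real b then 1 else 0)
      + (if k0 \<and> z = w0 then 1 else 0) + (if k1 \<and> z = w1 then 1 else 0)"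
proof -
  define A :: "complex poly" where "A = (if i then [:-of_real a,1:] else 1)"
  define B :: "complex poly" where "B = (if j then - [:-of_real b,1:] else 1)"
  define F0 :: "complex poly" where "F0 = (if k0 then [:-w0,1:] else 1)"
  define F1 :: "complex poly" where "F1 = (if k1 then [:-w1,1:] else 1)"
  have cA: "cpoly (if i then [:-a,1:] else 1) = A" by (simp add: A_def cpoly_pCons)
  have cB: "cpoly (if j then [:b,-1:] else 1) = B" by (simp add: B_def cpoly_pCons)
  have nz: "A \<noteq> 0" "B \<noteq> 0" "F0 \<noteq> 0" "F1 \<noteq> 0" "cpoly p \<noteq> 0"
    using p by (auto simp: A_def B_def F0_def F1_def cpoly_eq_0)
  have "cpoly (p * (if i then [:-a,1:] else 1) * (if j then [:b,-1:] else 1) * G) = cpoly p * A * B * (F0 * F1)"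
    by (simp only: cpoly_mult cA cB G F0_def F1_def)
  then have "order z (cpoly (p * (if i then [:-a,1:] else 1) * (if j then [:b,-1:] else 1) * G))
      = order z (cpoly p) + order z A + order z B + order z F0 + order z F1"
    using nz by (simp add: order_mult del: mult_pCons_left mult_pCons_right)
  moreover have "order z A = (if i \<and> z = of_real a then 1 else 0)" by (simp add: A_def order_lin)
  moreover have "order z B = (if j \<and> z = of_real b then 1 else 0)"
    by (cases j; simp only: B_def if_True if_False order_uminus order_lin order_1_eq_0; simp)
  moreover have "order z F0 = (if k0 \<and> z = w0 then 1 else 0)" by (simp add: F0_def order_lin)
  moreover have "order z F1 = (if k1 \<and> z = w1 then 1 else 0)" by (simp add: F1_def order_lin)
  ultimately show ?thesis by simp
qed

lemma sq_or_neg: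
  fixes T :: "real poly"
  assumes "T \<noteq> 0" "\<forall>z. even (order z (cpoly T))"
  shows "(\<exists>g. T = g * g) \<or> (\<exists>g. - T = g * g)"
proof -
  obtain x where x: "poly T x \<noteq> 0" using nonroot_in[OF assms(1), of 0 1] by auto
  show ?thesis
  proof (cases "poly T x > 0")
    case True then show ?thesis using even_sq[OF assms] by blast
  next
    case False
    then have "poly (-T) x > 0" using x by simp
    moreover have "\<forall>z. even (order z (cpoly (-T)))" using assms by (simp add: cpoly_uminus)
    ultimately show ?thesis using even_sq[of "-T" x] assms by auto
  qed
qed

context QS begin

lemma roots_info:
  assumes cm: "cpoly m = [:-w0,1:] * [:-w1,1:]"
  shows "distinct [of_real \<alpha>, of_real \<beta>, w0, w1]"
    and "poly (cpoly q) z = 0 \<longleftrightarrow> z = of_real \<alpha> \<or> z = of_real \<beta> \<or> z = w0 \<or> z = w1"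
proof -
  have cq: "cpoly q = [:-of_real \<alpha>,1:] * [:-of_real \<beta>,1:] * ([:-w0,1:] * [:-w1,1:])"
    by (subst q_split) (simp only: cpoly_mult cpoly_linear cm)
  have ord: "order z (cpoly q) = (if z = of_real \<alpha> then 1 else 0) + (if z = of_real \<beta> then 1 else 0)
      + (if z = w0 then 1 else 0) + (if z = w1 then 1 else 0)" for z
    by (simp only: cq, subst order_mult, simp, subst order_mult, simp, subst order_mult, simp,
        simp add: order_lin)
  show "distinct [of_real \<alpha>, of_real \<beta>, w0, w1]"
    using ord[of "of_real \<alpha>"] ord[of "of_real \<beta>"] ord[of w0] ord[of w1]
      ordq_le[of "of_real \<alpha>"] ordq_le[of "of_real \<beta>"] ordq_le[of w0] ordq_le[of w1] ab
    by (auto split: if_split_asm)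
  show "poly (cpoly q) z = 0 \<longleftrightarrow> z = of_real \<alpha> \<or> z = of_real \<beta> \<or> z = w0 \<or> z = w1"
    by (simp only: cq poly_mult mult_eq_0_iff) (simp add: algebra_simps)
qed

end


context QS begin

lemma poly_q: "poly q x = (x - \<alpha>) * (x - \<beta>) * poly m x"
  by (subst q_split) (simp add: algebra_simps)

lemma other_even:
  assumes p: "p \<noteq> 0" and H3: "\<forall>x. poly q x \<le> 0 \<longrightarrow> poly p x \<ge> 0"
  and H4: "\<forall>z. odd (order z (cpoly p)) \<longrightarrow> (Im z = 0 \<and> poly q (Re z) \<le> 0) \<or> poly (cpoly q) z = 0"
  and nz: "poly (cpoly q) z \<noteq> 0"
  shows "even (order z (cpoly p))"
proof (rule ccontr)
  assume o: "odd (order z (cpoly p))"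
  then have iz: "Im z = 0" and qn: "poly q (Re z) \<le> 0" using H4 nz by auto
  define r where "r = Re z"
  have zr: "z = of_real r" using iz by (simp add: r_def complex_eq_iff)
  have "poly q r \<noteq> 0" using nz zr by (simp add: poly_cpoly)
  then have "poly q r < 0" using qn r_def by simp
  then obtain d where d: "d > 0" "\<forall>x. \<bar>x - r\<bar> < d \<longrightarrow> poly q x < 0" using neg_nbhd by blast
  then have "\<forall>x. \<bar>x - r\<bar> < d \<longrightarrow> poly p x \<ge> 0" using H3 by auto
  then have "even (order r p)" using odd_sign[OF p d(1)] by blast
  then show False using o zr order_cpoly[OF p] by simp
qed

lemma m_cases:
  "(\<exists>w. Im w \<noteq> 0 \<and> cpoly m = [:-w,1:] * [:-cnj w,1:]) \<or>
   (\<exists>r2 r3. \<alpha> < r2 \<and> r2 < r3 \<and> r3 < \<beta> \<and> m = [:-r2,1:] * [:-r3,1:])"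
proof -
  obtain w0 w1 where cm: "cpoly m = [:-w0,1:] * [:-w1,1:]" using m_roots by blast
  have cnjroot: "w1 = cnj w0" if "Im w0 \<noteq> 0" "cpoly m = [:-w0,1:] * [:-w1,1:]" for w0 w1
  proof -
    have "poly (cpoly m) (cnj w0) = cnj (poly (cpoly m) w0)" by (rule poly_cpoly_cnj)
    also have "poly (cpoly m) w0 = 0" using that(2) by simp
    finally have "poly (cpoly m) (cnj w0) = 0" by simp
    then have "(cnj w0 - w0) * (cnj w0 - w1) = 0" using that(2) by (simp del: mult_pCons_left mult_pCons_right)
    moreover have "cnj w0 \<noteq> w0" using that(1) by (simp add: complex_eq_iff)
    ultimately show ?thesis by simp
  qed
  show ?thesis
  proof (cases "Im w0 \<noteq> 0")
    case True then show ?thesis using cnjroot[OF True cm] cm by blast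
  next
    case F0: False
    show ?thesis
    proof (cases "Im w1 \<noteq> 0")
      case True
      have cm': "cpoly m = [:-w1,1:] * [:-w0,1:]" using cm by (simp add: mult.commute)
      then show ?thesis using cnjroot[OF True cm'] True by blast
    next
      case False
      define r s where "r = Re w0" and "s = Re w1"
      have w: "w0 = of_real r" "w1 = of_real s" using F0 False by (auto simp: r_def s_def complex_eq_iff)
      have d: "distinct [of_real \<alpha>, of_real \<beta>, w0, w1]" using roots_info(1)[OF cm] .
      have "poly (cpoly q) w0 = 0" "poly (cpoly q) w1 = 0" using roots_info(2)[OF cm] by auto
      then have "poly q r = 0" "poly q s = 0" using w by (simp_all add: poly_cpoly)
      then have rs: "\<alpha> \<le> r" "r \<le> \<beta>" "\<alpha> \<le> s" "s \<le> \<beta>" using extreme by auto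
      have ne: "r \<noteq> s" "r \<noteq> \<alpha>" "r \<noteq> \<beta>" "s \<noteq> \<alpha>" "s \<noteq> \<beta>" using d w by auto
      have "cpoly m = cpoly ([:-r,1:] * [:-s,1:])" using cm w by (simp only: cpoly_mult cpoly_linear)
      then have mrs: "m = [:-r,1:] * [:-s,1:]" by (rule cpoly_inj)
      show ?thesis
      proof (cases "r < s")
        case True then show ?thesis using mrs rs ne by force
      next
        case False
        then have "s < r" using ne by simp
        moreover have "m = [:-s,1:] * [:-r,1:]" using mrs by (simp add: mult.commute)
        ultimately show ?thesis using rs ne by force
      qed
    qed
  qed
qed

lemma T_even:
  assumes p: "p \<noteq> 0" and H3: "\<forall>x. poly q x \<le> 0 \<longrightarrow> poly p x \<ge> 0"
  and H4: "\<forall>z. odd (order z (cpoly p)) \<longrightarrow> (Im z = 0 \<and> poly q (Re z) \<le> 0) \<or> poly (cpoly q) z = 0"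
  and cm: "cpoly m = [:-w0,1:] * [:-w1,1:]"
  and G: "cpoly G = (if odd (order w0 (cpoly p)) then [:-w0,1:] else 1) * (if odd (order w1 (cpoly p)) then [:-w1,1:] else 1)"
  shows "even (order z (cpoly (p * (if odd (order (of_real \<alpha>) (cpoly p)) then [:-\<alpha>,1:] else 1)
     * (if odd (order (of_real \<beta>) (cpoly p)) then [:\<beta>,-1:] else 1) * G)))"
proof -
  have d: "distinct [of_real \<alpha>, of_real \<beta>, w0, w1]" using roots_info(1)[OF cm] .
  note o = ord_T[OF p G, of z "odd (order (of_real \<alpha>) (cpoly p))" \<alpha> "odd (order (of_real \<beta>) (cpoly p))" \<beta>]
  show ?thesis
  proof (cases "poly (cpoly q) z = 0")
    case True
    then have "z = of_real \<alpha> \<or> z = of_real \<beta> \<or> z = w0 \<or> z = w1" using roots_info(2)[OF cm] by blast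
    then show ?thesis unfolding o using d by (elim disjE) auto
  next
    case False
    then have e: "even (order z (cpoly p))" using other_even[OF p H3 H4] by blast
    have "z \<noteq> of_real \<alpha>" "z \<noteq> of_real \<beta>" "z \<noteq> w0" "z \<noteq> w1"
      using False roots_info(2)[OF cm] by auto
    then show ?thesis unfolding o using e by simp
  qed
qed

definition W :: "bool \<Rightarrow> bool \<Rightarrow> bool \<Rightarrow> real poly" where
  "W i j k = (if i then [:-\<alpha>,1:] else 1) * (if j then [:\<beta>,-1:] else 1) * (if k then m else 1)"

lemma poly_class:
  assumes p: "p \<noteq> 0" and H3: "\<forall>x. poly q x \<le> 0 \<longrightarrow> poly p x \<ge> 0"
  and H4: "\<forall>z. odd (order z (cpoly p)) \<longrightarrow> (Im z = 0 \<and> poly q (Re z) \<le> 0) \<or> poly (cpoly q) z = 0"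
  shows "\<exists>i j k g. p * W i j k = g * g"
proof -
  define i where "i = odd (order (of_real \<alpha>) (cpoly p))"
  define j where "j = odd (order (of_real \<beta>) (cpoly p))"
  define A :: "real poly" where "A = (if i then [:-\<alpha>,1:] else 1)"
  define B :: "real poly" where "B = (if j then [:\<beta>,-1:] else 1)"
  have pA: "poly A x > 0" if "\<alpha> < x" for x using that by (simp add: A_def)
  have pB: "poly B x > 0" if "x < \<beta>" for x using that by (simp add: B_def)
  have ppos: "poly p x > 0" if "poly q x < 0" "poly p x \<noteq> 0" for x
  proof -
    have "poly p x \<ge> 0" using H3 that(1) by simp
    then show ?thesis using that(2) by simp
  qed
  from m_cases show ?thesis
  proof
    assume "\<exists>w. Im w \<noteq> 0 \<and> cpoly m = [:-w,1:] * [:-cnj w,1:]"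
    then obtain w where w: "Im w \<noteq> 0" "cpoly m = [:-w,1:] * [:-cnj w,1:]" by blast
    define k where "k = odd (order w (cpoly p))"
    have kc: "odd (order (cnj w) (cpoly p)) = k" using order_cnj[OF p] by (simp add: k_def)
    define G where "G = (if k then m else 1)"
    have cG: "cpoly G = (if odd (order w (cpoly p)) then [:-w,1:] else 1) * (if odd (order (cnj w) (cpoly p)) then [:-cnj w,1:] else 1)"
      using w(2) kc by (simp add: G_def k_def)
    define T where "T = p * A * B * G"
    have Tev: "\<forall>z. even (order z (cpoly T))"
      using T_even[OF p H3 H4 w(2) cG] by (simp add: T_def A_def B_def i_def j_def)
    have Tnz: "T \<noteq> 0" using p by (simp add: T_def A_def B_def G_def) (use q_split qnz in auto)
    have mpos: "poly m x > 0" for x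
    proof -
      have "complex_of_real (poly m x) = (of_real x - w) * cnj (of_real x - w)"
        using w(2) by (simp flip: poly_cpoly) (simp add: algebra_simps)
      also have "\<dots> = of_real ((Re (of_real x - w))^2 + (Im (of_real x - w))^2)" by (rule complex_mult_cnj)
      finally have "poly m x = (x - Re w)^2 + (Im w)^2" by (simp only: of_real_eq_iff) simp
      then show ?thesis using w(1) by (simp add: add_nonneg_pos)
    qed
    obtain x where x: "\<alpha> < x" "x < \<beta>" "poly p x \<noteq> 0" using nonroot_in[OF p ab] by blast
    have "poly q x < 0" using x mpos[of x] by (simp add: poly_q mult_pos_neg mult_neg_pos)
    then have "poly p x > 0" using ppos x by blast
    then have "poly T x > 0" using pA[OF x(1)] pB[OF x(2)] mpos[of x] by (simp add: T_def G_def)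
    then have "\<not> (\<exists>g. - T = g * g)" by (metis mult_minus_left neg_less_0_iff_less poly_minus poly_mult
          not_square_less_zero)
    then obtain g where "T = g * g" using sq_or_neg[OF Tnz Tev] by blast
    then show ?thesis unfolding W_def T_def A_def B_def G_def by (metis mult.assoc)
  next
    assume "\<exists>r2 r3. \<alpha> < r2 \<and> r2 < r3 \<and> r3 < \<beta> \<and> m = [:-r2,1:] * [:-r3,1:]"
    then obtain r2 r3 where r: "\<alpha> < r2" "r2 < r3" "r3 < \<beta>" "m = [:-r2,1:] * [:-r3,1:]" by blast
    have cm: "cpoly m = [:-of_real r2,1:] * [:-of_real r3,1:]" using r(4) by (simp only: cpoly_mult cpoly_linear)
    define k2 where "k2 = odd (order (of_real r2) (cpoly p))"
    define k3 where "k3 = odd (order (of_real r3) (cpoly p))"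
    define G where "G = (if k2 then [:-r2,1:] else 1) * (if k3 then [:-r3,1:] else 1)"
    have cG: "cpoly G = (if k2 then [:-of_real r2,1:] else 1) * (if k3 then [:-of_real r3,1:] else 1)"
      by (simp add: G_def cpoly_mult cpoly_linear)
    define T where "T = p * A * B * G"
    have Tev: "\<forall>z. even (order z (cpoly T))"
      using T_even[OF p H3 H4 cm cG[unfolded k2_def k3_def]] by (simp add: T_def A_def B_def i_def j_def k2_def k3_def)
    have Tnz: "T \<noteq> 0" using p by (simp add: T_def A_def B_def G_def)
    have pq: "poly q x = (x - \<alpha>) * (x - \<beta>) * ((x - r2) * (x - r3))" for x by (simp add: poly_q r(4) algebra_simps)
    obtain x1 where x1: "r3 < x1" "x1 < \<beta>" "poly p x1 \<noteq> 0" using nonroot_in[OF p r(3)] by blast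
    have "poly q x1 < 0" using x1 r by (simp add: pq mult_pos_neg mult_neg_pos)
    then have "poly p x1 > 0" using ppos x1 by blast
    moreover have "poly G x1 > 0" using x1 r by (simp add: G_def)
    ultimately have "poly T x1 > 0" using pA[of x1] pB[OF x1(2)] x1 r by (simp add: T_def)
    then have "\<not> (\<exists>g. - T = g * g)" by (metis mult_minus_left neg_less_0_iff_less poly_minus poly_mult
          not_square_less_zero)
    then obtain g where g: "T = g * g" using sq_or_neg[OF Tnz Tev] by blast
    obtain x0 where x0: "\<alpha> < x0" "x0 < r2" "poly p x0 \<noteq> 0" using nonroot_in[OF p r(1)] by blast
    have "poly q x0 < 0" using x0 r by (simp add: pq mult_pos_neg mult_neg_pos mult_neg_neg)
    then have p0: "poly p x0 > 0" using ppos x0 by blast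
    have kk: "k2 = k3"
    proof (rule ccontr)
      assume "k2 \<noteq> k3"
      then have "poly G x0 < 0" using x0 r by (cases k2) (auto simp: G_def)
      moreover have "poly p x0 * poly A x0 * poly B x0 > 0" using p0 pA[OF x0(1)] pB[of x0] x0 r by simp
      ultimately have "poly T x0 < 0" unfolding T_def poly_mult by (rule mult_pos_neg[rotated])
      moreover have "poly T x0 \<ge> 0" using g by simp
      ultimately show False by simp
    qed
    have "G = (if k2 then m else 1)" using kk by (simp add: G_def r(4))
    then have "p * W i j k2 = g * g" using g unfolding W_def T_def A_def B_def by (simp only: mult.assoc)
    then show ?thesis by blast
  qed
qed

end


context QS begin

lemma N_root:
  assumes zr: "cr_zeros_real q (a,b)" and z: "poly (cpoly (a*a + q*b*b)) z = 0"
  shows "Im z = 0 \<and> poly q (Re z) \<le> 0"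
proof -
  define Q where "Q = poly (cpoly q) z"
  define A where "A = poly (cpoly a) z"
  define B where "B = poly (cpoly b) z"
  define w where "w = csqrt (- Q)"
  have ww: "w * w = - Q" using power2_csqrt[of "-Q"] by (simp add: w_def power2_eq_square)
  have "A*A + Q*B*B = 0" using z by (simp add: cpoly_add cpoly_mult A_def B_def Q_def)
  moreover have "(A + B*w) * (A + B*(-w)) = A*A - B*B*(w*w)" by (simp add: algebra_simps)
  ultimately have "(A + B*w) * (A + B*(-w)) = 0" using ww by (simp add: algebra_simps)
  then have "A + B*w = 0 \<or> A + B*(-w) = 0" by simp
  moreover have "(z,w) \<in> complex_points q" "(z,-w) \<in> complex_points q"
    using ww by (simp_all add: complex_points_def Q_def power2_eq_square)
  ultimately have "Im z = 0 \<and> Im w = 0"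
    using zr unfolding cr_zeros_real_def cr_ceval_def by (auto simp: A_def B_def)
  then have zr': "z = of_real (Re z)" "w = of_real (Re w)" by (simp_all add: complex_eq_iff)
  have "Q = of_real (poly q (Re z))" unfolding Q_def by (subst zr'(1)) (simp add: poly_cpoly)
  then have "of_real (Re w * Re w) = (of_real (- poly q (Re z)) :: complex)"
    using ww zr'(2) by (metis of_real_minus of_real_mult)
  then have "Re w * Re w = - poly q (Re z)" by (simp only: of_real_eq_iff)
  then show ?thesis using \<open>Im z = 0 \<and> Im w = 0\<close> by (smt (verit) zero_le_square)
qed

lemma N_nonneg:
  assumes psd: "cr_psd q (a,b)"
  shows "poly (a*a + q*b*b) x \<ge> 0"
proof (cases "poly q x \<ge> 0")
  case True
  have "poly q x * (poly b x * poly b x) \<ge> 0" using True by simp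
  then show ?thesis by (simp add: algebra_simps add_nonneg_nonneg)
next
  case False
  define y where "y = sqrt (- poly q x)"
  have yy: "y * y = - poly q x" using False by (simp add: y_def)
  have "(x,y) \<in> real_points q" "(x,-y) \<in> real_points q" using yy
    by (simp_all add: real_points_def power2_eq_square)
  then have "poly a x + poly b x * y \<ge> 0" "poly a x + poly b x * (-y) \<ge> 0"
    using psd unfolding cr_psd_def cr_eval_def by fastforce+
  then have "(poly a x + poly b x * y) * (poly a x + poly b x * (-y)) \<ge> 0" by simp
  moreover have "(poly a x + poly b x * y) * (poly a x + poly b x * (-y)) = poly (a*a + q*b*b) x"
  proof -
    have "(poly a x + poly b x * y) * (poly a x + poly b x * (-y)) = poly a x * poly a x - poly b x * poly b x * (y*y)"
      by (simp add: algebra_simps)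
    then show ?thesis using yy by (simp add: algebra_simps)
  qed
  ultimately show ?thesis by simp
qed

lemma N_sq:
  assumes psd: "cr_psd q (a,b)" and zr: "cr_zeros_real q (a,b)"
  shows "\<exists>s. s * s = a*a + q*b*b"
proof (cases "a*a + q*b*b = 0")
  case True then show ?thesis by (intro exI[of _ 0]) simp
next
  case False
  define N where "N = a*a + q*b*b"
  have ev: "\<forall>z. even (order z (cpoly N))"
  proof
    fix z
    show "even (order z (cpoly N))"
    proof (cases "poly (cpoly N) z = 0")
      case True
      then have "Im z = 0" using N_root[OF zr] by (simp add: N_def)
      then have zr': "z = of_real (Re z)" by (simp add: complex_eq_iff)
      have "even (order (Re z) N)"
        using odd_sign[of N 1 "Re z"] False N_nonneg[OF psd] by (simp add: N_def)
      then show ?thesis using order_cpoly[of N "Re z"] False zr' by (simp add: N_def)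
    next
      case False then show ?thesis by (simp add: order_0I)
    qed
  qed
  obtain x where "poly N x \<noteq> 0" using nonroot_in[of N 0 1] False by (auto simp: N_def)
  moreover have "poly N x \<ge> 0" using N_nonneg[OF psd] by (simp add: N_def)
  ultimately have "poly N x > 0" by simp
  then obtain g where "N = g * g" using even_sq[OF _ ev] False by (auto simp: N_def)
  then show ?thesis by (auto simp: N_def)
qed

lemma f_poly:
  assumes f: "(a,b) \<noteq> (0,0)" and psd: "cr_psd q (a,b)" and zr: "cr_zeros_real q (a,b)"
  shows "\<exists>p s. p \<noteq> 0 \<and> s*s = a*a + q*b*b \<and> p = a + s \<and> (\<forall>x. poly q x \<le> 0 \<longrightarrow> poly p x \<ge> 0)
     \<and> (\<forall>z. odd (order z (cpoly p)) \<longrightarrow> (Im z = 0 \<and> poly q (Re z) \<le> 0) \<or> poly (cpoly q) z = 0)"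
proof -
  obtain s0 where s0: "s0 * s0 = a*a + q*b*b" using N_sq[OF psd zr] by blast
  obtain s where s: "s * s = a*a + q*b*b" "a + s \<noteq> 0"
  proof (cases "a + s0 = 0")
    case True
    have "a - s0 \<noteq> 0"
    proof
      assume "a - s0 = 0"
      with True have "a = 0" "s0 = 0" by (simp_all add: algebra_simps)
      with s0 have "q * (b * b) = 0" by (simp add: algebra_simps)
      then have "b = 0" using qnz by simp
      then show False using f \<open>a = 0\<close> by simp
    qed
    then show ?thesis using that[of "-s0"] s0 by simp
  next
    case False then show ?thesis using that[of s0] s0 by simp
  qed
  define p where "p = a + s"
  have pnz: "p \<noteq> 0" using s by (simp add: p_def)
  have rel: "p * (s - a) = q * b * b" using s(1) by (simp add: p_def algebra_simps)
  have H3: "poly p x \<ge> 0" if qx: "poly q x \<le> 0" for x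
  proof -
    define y where "y = sqrt (- poly q x)"
    have yy: "y * y = - poly q x" using qx by (simp add: y_def)
    have pts: "(x,y) \<in> real_points q" "(x,-y) \<in> real_points q" using yy
      by (simp_all add: real_points_def power2_eq_square)
    then have f1: "poly a x + poly b x * y \<ge> 0" "poly a x + poly b x * (-y) \<ge> 0"
      using psd unfolding cr_psd_def cr_eval_def by fastforce+
    have ss: "poly s x * poly s x = poly a x * poly a x + poly q x * poly b x * poly b x"
      using s(1) by (metis poly_add poly_mult)
    have iden: "(poly p x + poly b x * t)^2 = 2 * poly p x * (poly a x + poly b x * t)"
      if "t * t = - poly q x" for t
    proof -
      have "(poly p x + poly b x * t)^2 = poly p x * poly p x + 2 * poly p x * poly b x * t + poly b x * poly b x * (t*t)"
        by (simp add: power2_eq_square algebra_simps)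
      also have "\<dots> = 2 * poly p x * (poly a x + poly b x * t)"
        using that ss by (simp add: p_def algebra_simps)
      finally show ?thesis .
    qed
    show ?thesis
    proof (cases "poly a x + poly b x * y > 0")
      case True
      have "2 * poly p x * (poly a x + poly b x * y) \<ge> 0" using iden[OF yy] by (metis zero_le_power2)
      then show ?thesis using True by (simp add: zero_le_mult_iff)
    next
      case F1: False
      show ?thesis
      proof (cases "poly a x + poly b x * (-y) > 0")
        case True
        have "(-y)*(-y) = - poly q x" using yy by simp
        then have "2 * poly p x * (poly a x + poly b x * (-y)) \<ge> 0" using iden by (metis zero_le_power2)
        then show ?thesis using True by (simp add: zero_le_mult_iff)
      next
        case False
        then have "poly a x + poly b x * y = 0" "poly a x + poly b x * (-y) = 0" using f1 F1 by simp_all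
        then have "poly p x + poly b x * y = 0" "poly p x + poly b x * (-y) = 0"
          using iden[OF yy] iden[of "-y"] yy by simp_all
        then have "poly p x = 0" by linarith
        then show ?thesis by simp
      qed
    qed
  qed
  have H4: "(Im z = 0 \<and> poly q (Re z) \<le> 0) \<or> poly (cpoly q) z = 0"
    if o: "odd (order z (cpoly p))" for z
  proof (rule ccontr)
    assume nc: "\<not> ((Im z = 0 \<and> poly q (Re z) \<le> 0) \<or> poly (cpoly q) z = 0)"
    have pz: "poly (cpoly p) z = 0" using o pnz order_root[of "cpoly p" z] by (auto simp: cpoly_eq_0)
    have sz: "poly (cpoly s) z \<noteq> 0"
    proof
      assume "poly (cpoly s) z = 0"
      then have "poly (cpoly (a*a + q*b*b)) z = 0" by (simp flip: s(1) add: cpoly_mult)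
      then show False using N_root[OF zr] nc by blast
    qed
    have az: "poly (cpoly a) z = - poly (cpoly s) z" using pz by (simp add: p_def cpoly_add eq_neg_iff_add_eq_0)
    have saz: "poly (cpoly (s - a)) z \<noteq> 0" using sz az by (simp add: cpoly_diff)
    have sanz: "s - a \<noteq> 0" using saz by auto
    have qbb: "q * b * b \<noteq> 0" using rel pnz sanz by (metis mult_eq_0_iff)
    have bnz: "b \<noteq> 0" using qbb by auto
    have "order z (cpoly (p * (s - a))) = order z (cpoly (q * b * b))" using rel by simp
    then have "order z (cpoly p) + order z (cpoly (s - a)) = order z (cpoly q) + order z (cpoly b) + order z (cpoly b)"
      using pnz sanz qnz bnz by (simp add: cpoly_mult order_mult cpoly_eq_0)
    moreover have "order z (cpoly (s - a)) = 0" using saz by (rule order_0I)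
    moreover have "order z (cpoly q) = 0" using nc by (intro order_0I) simp
    ultimately show False using o by simp
  qed
  show ?thesis using pnz s(1) H3 H4 p_def by blast
qed

end


lemma ff_mult_tf: "ff_mult q (to_fract a, to_fract b) (to_fract c, to_fract d)
   = (to_fract (a*c - b*d*q), to_fract (a*d + b*c))"
  by (simp add: ff_mult_def to_fract_mult to_fract_diff to_fract_add)

definition pp :: "real poly \<Rightarrow> ffel" where "pp P = (to_fract P, 0)"

lemma pp_mult: "ff_mult q (pp A) (pp B) = pp (A * B)"
  by (simp add: pp_def ff_mult_def to_fract_mult)

lemma pp_nz: "P \<noteq> 0 \<Longrightarrow> pp P \<noteq> (0,0)"
  by (simp add: pp_def to_fract_eq_0)

lemma pp_1: "pp 1 = (1,0)" by (simp add: pp_def to_fract_1)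

lemma sq_pp:
  assumes "ff_mult q h h = pp P"
  shows "(\<exists>c. to_fract P = c * c * to_fract 1) \<or> (\<exists>d. to_fract P = d * d * to_fract (-q))"
proof -
  obtain c d where h: "h = (c,d)" by (cases h)
  have e1: "c*c - d*d*to_fract q = to_fract P" and e2: "c*d + d*c = 0"
    using assms by (simp_all add: h ff_mult_def pp_def)
  have "2 * (c * d) = 0" using e2 by (simp add: algebra_simps)
  then have "c = 0 \<or> d = 0" by simp
  then show ?thesis
  proof
    assume "c = 0" then show ?thesis using e1 by (intro disjI2 exI[of _ d]) (simp add: to_fract_uminus)
  next
    assume "d = 0" then show ?thesis using e1 by (intro disjI1 exI[of _ c]) (simp add: to_fract_1)
  qed
qed

lemma not_sq_pp:
  assumes P: "P \<noteq> 0" and q: "q \<noteq> 0"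
  and za: "odd (order za (cpoly P))" and zb: "odd (order zb (cpoly P) + order zb (cpoly q))"
  shows "ff_mult q h h \<noteq> pp P"
proof
  assume "ff_mult q h h = pp P"
  then consider c where "to_fract P = c * c * to_fract 1" | d where "to_fract P = d * d * to_fract (-q)"
    using sq_pp by blast
  then show False
  proof cases
    case 1
    have "odd (order za (cpoly P) + order za (cpoly 1))" using za by simp
    then show False using nosq[OF P _ _] 1 by (metis one_neq_zero)
  next
    case 2
    have "odd (order zb (cpoly P) + order zb (cpoly (-q)))" using zb by (simp add: cpoly_uminus)
    then show False using nosq[OF P _ _] 2 q by (metis neg_equal_0_iff_equal)
  qed
qed

context QS begin

lemma ordq_root: "poly (cpoly q) z = 0 \<Longrightarrow> order z (cpoly q) = 1"
  using ordq_le[of z] order_root[of "cpoly q" z] qnz by (auto simp: cpoly_eq_0)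

lemma ordq_alpha: "order (of_real \<alpha>) (cpoly q) = 1"
  using ordq_root alpha by (simp add: poly_cpoly)
lemma ordq_beta: "order (of_real \<beta>) (cpoly q) = 1"
  using ordq_root beta by (simp add: poly_cpoly)

sublocale KF q
proof
  fix c
  have "odd (order (of_real \<alpha>) (cpoly (-q)) + order (of_real \<alpha>) (cpoly 1))"
    using ordq_alpha by (simp add: cpoly_uminus)
  then have "to_fract (-q) \<noteq> c * c * to_fract 1" using nosq[of "-q" 1] qnz by simp
  then show "c * c \<noteq> - to_fract q" by (simp add: to_fract_uminus to_fract_1)
qed

definition u :: ffel where "u = pp [:-\<alpha>,1:]"
definition v :: ffel where "v = pp [:\<beta>,-1:]"

lemma cpoly_V: "cpoly [:\<beta>,-1:] = - [:-of_real \<beta>, 1:]"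
  by (simp add: cpoly_pCons)

lemma ord_U: "order z (cpoly [:-\<alpha>,1:]) = (if z = of_real \<alpha> then 1 else 0)"
  by (simp only: cpoly_linear order_lin)
lemma ord_V: "order z (cpoly [:\<beta>,-1:]) = (if z = of_real \<beta> then 1 else 0)"
  by (simp only: cpoly_V order_uminus order_lin)

lemma u_nsq: "ff_mult q h h \<noteq> u"
  unfolding u_def using ab ordq_beta
  by (intro not_sq_pp[where za="of_real \<alpha>" and zb="of_real \<beta>", OF _ qnz]) (auto simp: ord_U)

lemma v_nsq: "ff_mult q h h \<noteq> v"
  unfolding v_def using ab ordq_alpha
  by (intro not_sq_pp[where za="of_real \<beta>" and zb="of_real \<alpha>", OF _ qnz]) (auto simp: ord_V)

lemma uv_nsq: "ff_mult q h h \<noteq> ff_mult q u v"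
proof -
  obtain w0 w1 where cm: "cpoly m = [:-w0,1:] * [:-w1,1:]" using m_roots by blast
  have d: "distinct [of_real \<alpha>, of_real \<beta>, w0, w1]" using roots_info(1)[OF cm] .
  have w0q: "poly (cpoly q) w0 = 0" using roots_info(2)[OF cm] by simp
  have nz: "[:-\<alpha>,1:] * [:\<beta>,-1:] \<noteq> 0" by (simp del: mult_pCons_left mult_pCons_right)
  have o: "order z (cpoly ([:-\<alpha>,1:] * [:\<beta>,-1:])) = order z (cpoly [:-\<alpha>,1:]) + order z (cpoly [:\<beta>,-1:])" for z
    using nz by (simp only: cpoly_mult) (rule order_mult, simp add: cpoly_eq_0 del: mult_pCons_left mult_pCons_right)
  have "ff_mult q h h \<noteq> pp ([:-\<alpha>,1:] * [:\<beta>,-1:])"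
    apply (rule not_sq_pp[where za="of_real \<alpha>" and zb="w0", OF nz qnz])
    unfolding o ord_U ord_V using ab d ordq_root[OF w0q] by auto
  then show ?thesis by (simp add: u_def v_def pp_mult)
qed

end


lemma ff_of_pp: "ff_of (P, 0) = pp P" by (simp add: ff_of_def pp_def to_fract_0)

context QS begin

lemma u_nz: "u \<noteq> (0,0)" unfolding u_def by (rule pp_nz) simp
lemma v_nz: "v \<noteq> (0,0)" unfolding v_def by (rule pp_nz) simp

definition e :: "bool \<Rightarrow> bool \<Rightarrow> ffel" where
  "e i j = ff_mult q (if i then u else (1,0)) (if j then v else (1,0))"

lemma e_nz: "e i j \<noteq> (0,0)"
  unfolding e_def using u_nz v_nz by (intro fm_nz) auto

lemma e_mult: "ff_mult q (e i1 j1) (e i2 j2)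
   = ff_mult q (e (i1 \<noteq> i2) (j1 \<noteq> j2)) (ff_mult q (e (i1 \<and> i2) (j1 \<and> j2)) (e (i1 \<and> i2) (j1 \<and> j2)))"
  unfolding e_def by (cases i1; cases i2; cases j1; cases j2; simp add: fm_ac)
definition M :: "ffel set" where "M = {z. \<exists>i j. R (e i j) z}"

lemma M_R: "z \<in> M \<Longrightarrow> R z z' \<Longrightarrow> z' \<in> M"
  unfolding M_def using R_trans by blast

lemma M_e: "e i j \<in> M" unfolding M_def using R_refl by blast

lemma M_mult: assumes "z1 \<in> M" "z2 \<in> M" shows "ff_mult q z1 z2 \<in> M"
proof -
  obtain i1 j1 i2 j2 where r: "R (e i1 j1) z1" "R (e i2 j2) z2" using assms unfolding M_def by blast
  have "R (ff_mult q (e i1 j1) (e i2 j2)) (ff_mult q z1 z2)" using R_mult[OF r] .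
  moreover have "R (e (i1 \<noteq> i2) (j1 \<noteq> j2)) (ff_mult q (e i1 j1) (e i2 j2))"
    by (subst e_mult) (rule R_sq[OF e_nz])
  ultimately show ?thesis unfolding M_def using R_trans by blast
qed

lemma e_FF: "e False False = (1,0)" by (simp add: e_def)
lemma e_TF: "e True False = u" by (simp add: e_def fm_ac)
lemma e_FT: "e False True = v" by (simp add: e_def)
lemma e_TT: "e True True = ff_mult q u v" by (simp add: e_def)

lemma M_one: "(1,0) \<in> M" using M_e[of False False] by (simp add: e_FF)
lemma M_u: "u \<in> M" using M_e[of True False] by (simp add: e_TF)
lemma M_v: "v \<in> M" using M_e[of False True] by (simp add: e_FT)

lemma M_inv: assumes z: "z \<in> M" and g: "ff_mult q z g = (1,0)" shows "g \<in> M"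
proof -
  obtain i j where r: "R (e i j) z" using z unfolding M_def by blast
  define a where "a = e i j"
  have "R (ff_mult q a g) (ff_mult q z g)" using R_mult[OF r R_refl] by (simp add: a_def)
  then have r1: "R (ff_mult q a g) (1,0)" using g by simp
  have "R (ff_mult q a (ff_mult q a g)) (ff_mult q a (1,0))" using R_mult[OF R_refl r1] .
  then have r2: "R (ff_mult q g (ff_mult q a a)) a" by (simp add: fm_ac)
  have "R g (ff_mult q g (ff_mult q a a))" using R_sq[OF e_nz] by (simp add: a_def)
  then have "R g a" using r2 R_trans by blast
  then have "R a g" by (rule R_sym)
  then show ?thesis unfolding M_def a_def by blast
qed

lemma M_m: "pp m \<in> M"
proof -
  have "ff_mult q u v = pp ([:-\<alpha>,1:] * [:\<beta>,-1:])" by (simp add: u_def v_def pp_mult)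
  moreover have "ff_mult q (pp ([:-\<alpha>,1:] * [:\<beta>,-1:])) (pp m) = ff_mult q (0,1) (0,1)"
  proof -
    have V: "[:\<beta>,-1:] = - [:-\<beta>,1:]" by simp
    have "[:-\<alpha>,1:] * [:\<beta>,-1:] * m = - q"
      by (simp only: V mult_minus_right mult_minus_left q_split[symmetric])
    then have "ff_mult q (pp ([:-\<alpha>,1:] * [:\<beta>,-1:])) (pp m) = pp (-q)" by (simp only: pp_mult)
    moreover have "ff_mult q (0,1) (0,1) = pp (-q)" by (simp add: ff_mult_def pp_def to_fract_uminus)
    ultimately show ?thesis by simp
  qed
  ultimately have eq: "ff_mult q (ff_mult q u v) (pp m) = ff_mult q (0,1) (0,1)" by (simp only:)
  have nzuv: "ff_mult q u v \<noteq> (0,0)" using fm_nz u_nz v_nz by blast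
  have "R (ff_mult q u v) (pp m)" by (rule R_from[OF eq nzuv]) simp
  then show ?thesis using M_R M_e[of True True] by (simp add: e_TT)
qed

lemma M_W: "pp (W i j k) \<in> M"
proof -
  have a: "pp (if i then [:-\<alpha>,1:] else 1) \<in> M" using M_u M_one by (simp add: u_def pp_1)
  have b: "pp (if j then [:\<beta>,-1:] else 1) \<in> M" using M_v M_one by (simp add: v_def pp_1)
  have c: "pp (if k then m else 1) \<in> M" using M_m M_one by (simp add: pp_1)
  show ?thesis using M_mult[OF M_mult[OF a b] c] by (simp add: W_def pp_mult)
qed

lemma m_nz: "m \<noteq> 0" using q_split qnz by auto

lemma W_nz: "W i j k \<noteq> 0" using m_nz by (simp add: W_def)

lemma M_f: assumes "f \<in> psd_realzero_elems q" shows "f \<in> M"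
proof -
  obtain a b where f: "f = ff_of (a,b)" "(a,b) \<noteq> (0,0)" "cr_psd q (a,b)" "cr_zeros_real q (a,b)"
    using assms unfolding psd_realzero_elems_def by auto
  obtain p s where ps: "p \<noteq> 0" "s*s = a*a + q*b*b" "p = a + s"
    "\<forall>x. poly q x \<le> 0 \<longrightarrow> poly p x \<ge> 0"
    "\<forall>z. odd (order z (cpoly p)) \<longrightarrow> (Im z = 0 \<and> poly q (Re z) \<le> 0) \<or> poly (cpoly q) z = 0"
    using f_poly[OF f(2-4)] by blast
  obtain i j k g where g: "p * W i j k = g * g" using poly_class[OF ps(1,4,5)] by blast
  have gnz: "g \<noteq> 0"
  proof
    assume "g = 0"
    then have "p * W i j k = 0" using g by simp
    then show False using ps(1) W_nz by simp
  qed
  have r1: "R (pp (W i j k)) (pp p)"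
  proof (rule R_from[of _ _ "pp g"])
    show "ff_mult q (pp (W i j k)) (pp p) = ff_mult q (pp g) (pp g)"
      using g by (simp only: pp_mult mult.commute)
    show "pp (W i j k) \<noteq> (0,0)" by (rule pp_nz[OF W_nz])
    show "pp g \<noteq> (0,0)" by (rule pp_nz[OF gnz])
  qed
  have two: "p * [:2:] = p + p"
  proof -
    have "[:2:] = (1 + 1 :: real poly)" by (simp add: one_pCons)
    then show ?thesis by (simp add: distrib_left)
  qed
  have r2: "R (pp p) (pp (p + p))"
  proof -
    have "pp (p * [:2:]) = ff_mult q (pp p) (ff_mult q (pp [:sqrt 2:]) (pp [:sqrt 2:]))"
      by (simp only: pp_mult mult_to_poly) simp
    then have "pp (p + p) = ff_mult q (pp p) (ff_mult q (pp [:sqrt 2:]) (pp [:sqrt 2:]))" by (simp only: two)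
    then show ?thesis using R_sq[of "pp [:sqrt 2:]" "pp p"] by (simp add: pp_nz)
  qed
  have r3: "R (pp (p + p)) f"
  proof (rule R_from[of _ _ "(to_fract p, to_fract b)"])
    have e1: "(p + p) * a - 0 * b * q = p * p - b * b * q" using ps(2,3) by (simp add: algebra_simps)
    have e2: "(p + p) * b + 0 * a = p * b + b * p" by (simp add: algebra_simps)
    have "pp (p + p) = (to_fract (p+p), to_fract 0)" by (simp add: pp_def to_fract_0)
    then have "ff_mult q (pp (p + p)) f = ff_mult q (to_fract (p+p), to_fract 0) (to_fract a, to_fract b)"
      by (simp add: f(1) ff_of_def)
    also have "\<dots> = ff_mult q (to_fract p, to_fract b) (to_fract p, to_fract b)"
      by (simp only: ff_mult_tf e1 e2)
    finally show "ff_mult q (pp (p + p)) f = ff_mult q (to_fract p, to_fract b) (to_fract p, to_fract b)" .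
    show "pp (p + p) \<noteq> (0,0)" using ps(1) by (intro pp_nz) simp
    show "(to_fract p, to_fract b) \<noteq> (0,0)" using ps(1) by (simp add: to_fract_eq_0)
  qed
  show ?thesis using M_R[OF M_R[OF M_R[OF M_W r1] r2] r3] .
qed

lemma gen_M: "ff_gen q (psd_realzero_elems q) \<subseteq> M"
proof
  fix z assume "z \<in> ff_gen q (psd_realzero_elems q)"
  then show "z \<in> M"
  proof (induct rule: ff_gen.induct)
    case one then show ?case by (rule M_one)
  next
    case (base f) then show ?case by (rule M_f)
  next
    case (mult f g) then show ?case using M_mult by blast
  next
    case (inv f g) then show ?case using M_inv by blast
  qed
qed

end


lemma ff_gen_mono: "S \<subseteq> T \<Longrightarrow> ff_gen q S \<subseteq> ff_gen q T"
proof
  fix z assume st: "S \<subseteq> T" and zs: "z \<in> ff_gen q S"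
  from zs show "z \<in> ff_gen q T"
    by (induct rule: ff_gen.induct) (use st in \<open>auto intro: ff_gen.intros\<close>)
qed

context QS begin

lemma R_prod_sq: assumes "R a b" shows "\<exists>k. ff_mult q a b = ff_mult q k k"
proof -
  obtain h where h: "b = ff_mult q a (ff_mult q h h)" using assms unfolding R_def2 by blast
  have "ff_mult q a b = ff_mult q (ff_mult q a h) (ff_mult q a h)" by (simp add: h fm_ac)
  then show ?thesis by blast
qed

lemma cancel_sq:
  assumes "ff_mult q (ff_mult q a a) b = ff_mult q k k" "a \<noteq> (0,0)"
  shows "\<exists>k'. b = ff_mult q k' k'"
proof -
  define ia where "ia = ffinv q a"
  have i: "ff_mult q a ia = (1,0)" using fm_inv[OF assms(2)] by (simp add: ia_def)
  have "b = ff_mult q b (ff_mult q (ff_mult q a ia) (ff_mult q a ia))" using i by simp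
  also have "\<dots> = ff_mult q (ff_mult q (ff_mult q a a) b) (ff_mult q ia ia)" by (simp add: fm_ac)
  also have "\<dots> = ff_mult q (ff_mult q k ia) (ff_mult q k ia)" using assms(1) by (simp add: fm_ac)
  finally show ?thesis by blast
qed

lemma sq_class_R: "sq_class q a = sq_class q b \<Longrightarrow> R a b"
  using R_refl[of b] unfolding R_def by simp

lemma classes_distinct:
  "sq_class q (e False False) \<noteq> sq_class q (e True False)"
  "sq_class q (e False False) \<noteq> sq_class q (e False True)"
  "sq_class q (e False False) \<noteq> sq_class q (e True True)"
  "sq_class q (e True False) \<noteq> sq_class q (e False True)"
  "sq_class q (e True False) \<noteq> sq_class q (e True True)"
  "sq_class q (e False True) \<noteq> sq_class q (e True True)"
proof -
  show "sq_class q (e False False) \<noteq> sq_class q (e True False)"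
  proof
    assume "sq_class q (e False False) = sq_class q (e True False)"
    then obtain k where "ff_mult q (1,0) u = ff_mult q k k"
      using R_prod_sq[OF sq_class_R] unfolding e_FF e_TF by blast
    then show False using u_nsq by (metis fm_one)
  qed
  show "sq_class q (e False False) \<noteq> sq_class q (e False True)"
  proof
    assume "sq_class q (e False False) = sq_class q (e False True)"
    then obtain k where "ff_mult q (1,0) v = ff_mult q k k"
      using R_prod_sq[OF sq_class_R] unfolding e_FF e_FT by blast
    then show False using v_nsq by (metis fm_one)
  qed
  show "sq_class q (e False False) \<noteq> sq_class q (e True True)"
  proof
    assume "sq_class q (e False False) = sq_class q (e True True)"
    then obtain k where "ff_mult q (1,0) (ff_mult q u v) = ff_mult q k k"
      using R_prod_sq[OF sq_class_R] unfolding e_FF e_TT by blast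
    then show False using uv_nsq by (metis fm_one)
  qed
  show "sq_class q (e True False) \<noteq> sq_class q (e False True)"
  proof
    assume "sq_class q (e True False) = sq_class q (e False True)"
    then obtain k where "ff_mult q u v = ff_mult q k k"
      using R_prod_sq[OF sq_class_R] unfolding e_TF e_FT by blast
    then show False using uv_nsq by metis
  qed
  show "sq_class q (e True False) \<noteq> sq_class q (e True True)"
  proof
    assume "sq_class q (e True False) = sq_class q (e True True)"
    then obtain k where "ff_mult q u (ff_mult q u v) = ff_mult q k k"
      using R_prod_sq[OF sq_class_R] unfolding e_TF e_TT by blast
    then have "ff_mult q (ff_mult q u u) v = ff_mult q k k" by (simp add: fm_ac)
    then show False using cancel_sq u_nz v_nsq by metis
  qed
  show "sq_class q (e False True) \<noteq> sq_class q (e True True)"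
  proof
    assume "sq_class q (e False True) = sq_class q (e True True)"
    then obtain k where "ff_mult q v (ff_mult q u v) = ff_mult q k k"
      using R_prod_sq[OF sq_class_R] unfolding e_FT e_TT by blast
    then have "ff_mult q (ff_mult q v v) u = ff_mult q k k" by (simp add: fm_ac)
    then show False using cancel_sq v_nz u_nsq by metis
  qed
qed

lemma u_P: "u \<in> psd_realzero_elems q"
proof -
  have psd: "cr_psd q ([:-\<alpha>,1:], 0)"
    unfolding cr_psd_def cr_eval_def real_points_def
  proof (clarify)
    fix x y :: real assume "y\<^sup>2 + poly q x = 0"
    then have "poly q x \<le> 0" by (smt (verit) zero_le_power2)
    then show "0 \<le> poly (fst ([:-\<alpha>,1:], 0::real poly)) x + poly (snd ([:-\<alpha>,1:], 0::real poly)) x * y"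
      using q_nonpos by simp
  qed
  have zr: "cr_zeros_real q ([:-\<alpha>,1:], 0)"
    unfolding cr_zeros_real_def cr_ceval_def complex_points_def
  proof (clarify)
    fix z w :: complex
    assume w: "w\<^sup>2 + poly (cpoly q) z = 0"
      and z: "poly (cpoly (fst ([:-\<alpha>,1:], 0::real poly))) z + poly (cpoly (snd ([:-\<alpha>,1:], 0::real poly))) z * w = 0"
    have zz: "z = of_real \<alpha>" using z by (simp add: cpoly_pCons)
    then have "poly (cpoly q) z = 0" using alpha by (simp add: poly_cpoly)
    then have "w = 0" using w by simp
    then show "Im z = 0 \<and> Im w = 0" using zz by simp
  qed
  have "u = ff_of ([:-\<alpha>,1:], 0)" by (simp add: u_def ff_of_pp)
  then show ?thesis using psd zr unfolding psd_realzero_elems_def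
    by (intro CollectI exI[of _ "([:-\<alpha>,1:], 0::real poly)"]) simp
qed

lemma v_P: "v \<in> psd_realzero_elems q"
proof -
  have psd: "cr_psd q ([:\<beta>,-1:], 0)"
    unfolding cr_psd_def cr_eval_def real_points_def
  proof (clarify)
    fix x y :: real assume "y\<^sup>2 + poly q x = 0"
    then have "poly q x \<le> 0" by (smt (verit) zero_le_power2)
    then show "0 \<le> poly (fst ([:\<beta>,-1:], 0::real poly)) x + poly (snd ([:\<beta>,-1:], 0::real poly)) x * y"
      using q_nonpos by simp
  qed
  have zr: "cr_zeros_real q ([:\<beta>,-1:], 0)"
    unfolding cr_zeros_real_def cr_ceval_def complex_points_def
  proof (clarify)
    fix z w :: complex
    assume w: "w\<^sup>2 + poly (cpoly q) z = 0"
      and z: "poly (cpoly (fst ([:\<beta>,-1:], 0::real poly))) z + poly (cpoly (snd ([:\<beta>,-1:], 0::real poly))) z * w = 0"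
    have zz: "z = of_real \<beta>" using z by (simp add: cpoly_pCons)
    then have "poly (cpoly q) z = 0" using beta by (simp add: poly_cpoly)
    then have "w = 0" using w by simp
    then show "Im z = 0 \<and> Im w = 0" using zz by simp
  qed
  have "v = ff_of ([:\<beta>,-1:], 0)" by (simp add: v_def ff_of_pp)
  then show ?thesis using psd zr unfolding psd_realzero_elems_def
    by (intro CollectI exI[of _ "([:\<beta>,-1:], 0::real poly)"]) simp
qed

lemma main:
  "card (sq_class q ` ff_gen q (psd_realzero_elems q)) = 4
   \<and> sq_class q ` ff_gen q (psd_realzero_elems q)
     = sq_class q ` ff_gen q {ff_of ([:-\<alpha>, 1:], 0), ff_of ([:\<beta>, -1:], 0)}"
proof -
  define A where "A = ff_gen q (psd_realzero_elems q)"
  define B where "B = ff_gen q {ff_of ([:-\<alpha>, 1:], 0), ff_of ([:\<beta>, -1:], 0)}"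
  define SE where "SE = {sq_class q (e False False), sq_class q (e True False),
      sq_class q (e False True), sq_class q (e True True)}"
  have uv: "ff_of ([:-\<alpha>, 1:], 0) = u" "ff_of ([:\<beta>, -1:], 0) = v"
    by (simp_all add: u_def v_def ff_of_pp)
  have BA: "B \<subseteq> A" unfolding A_def B_def uv using u_P v_P by (intro ff_gen_mono) auto
  have uB: "u \<in> B" "v \<in> B" unfolding B_def uv by (auto intro: ff_gen.base)
  have eB: "e i j \<in> B" for i j
  proof -
    have "(1,0) \<in> B" unfolding B_def by (rule ff_gen.one)
    then show ?thesis using uB unfolding B_def
      by (cases i; cases j) (simp_all add: e_FF e_TF e_FT e_TT ff_gen.mult)
  qed
  have AS: "sq_class q ` A \<subseteq> SE"
  proof
    fix c assume "c \<in> sq_class q ` A"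
    then obtain z where z: "z \<in> A" "c = sq_class q z" by blast
    then have "z \<in> M" using gen_M unfolding A_def by blast
    then obtain i j where "R (e i j) z" unfolding M_def by blast
    then have "c = sq_class q (e i j)" using R_sq_class z(2) by simp
    then show "c \<in> SE" unfolding SE_def by (cases i; cases j) auto
  qed
  have SB: "SE \<subseteq> sq_class q ` B" unfolding SE_def using eB by auto
  have eq1: "sq_class q ` A = SE" using AS SB BA by blast
  have eq2: "sq_class q ` B = SE" using AS SB BA by blast
  have "card SE = 4" unfolding SE_def using classes_distinct by simp
  then show ?thesis using eq1 eq2 unfolding A_def B_def by simp
qed

end


theorem proposition2p10:
  fixes q :: "real poly" and \<alpha> \<beta> :: real
  assumes monic: "lead_coeff q = 1"
    and deg: "degree q = 4"
    and sqfree: "rsquarefree (map_poly complex_of_real q)"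
    and indef: "(\<exists>x. poly q x > 0) \<and> (\<exists>x. poly q x < 0)"
    and alpha: "poly q \<alpha> = 0" and beta: "poly q \<beta> = 0"
    and extreme: "\<forall>x. poly q x = 0 \<longrightarrow> \<alpha> \<le> x \<and> x \<le> \<beta>"
  shows "card (sq_class q ` ff_gen q (psd_realzero_elems q)) = 4
       \<and> sq_class q ` ff_gen q (psd_realzero_elems q)
         = sq_class q ` ff_gen q {ff_of ([:-\<alpha>, 1:], 0), ff_of ([:\<beta>, -1:], 0)}"
proof -
  interpret QS q \<alpha> \<beta>
    using monic deg sqfree indef alpha beta extreme by unfold_locales
  show ?thesis by (rule main)
qed

end
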